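(* Let $\mathfrak l$ be a real finite-dimensional nilpotent Lie algebra with $\dim\mathfrak l'=2$ and $\mathfrak l'\subset\mathfrak z(\mathfrak l)$, let $\bar{\mathfrak l}\subset\mathfrak l$ be a 3-dimensional subspace with $[\bar{\mathfrak l},\bar{\mathfrak l}]=\mathfrak l'$, let $\mathfrak a$ be a semisimple orthogonal $\mathfrak l$-module, and let $[\alpha,\gamma]\in\mathcal H^2_Q(\mathfrak l,\mathfrak a)$ be admissible, represented by $(\alpha,\gamma)$ with $\alpha(\mathfrak l,\mathfrak l)\subset\mathfrak a^{\mathfrak l}$. If $K\in\mathfrak l'$ satisfies $\alpha(K,\bar{\mathfrak l})=0$, then $\alpha(K,\mathfrak l)=0$.
   Context: For a Lie algebra $\mathfrak l$: $\mathfrak l^1=\mathfrak l$, $\mathfrak l^{k+1}=[\mathfrak l,\mathfrak l^k]$, $\mathfrak l'=\mathfrak l^2$, $\mathfrak z(\mathfrak l)$ the centre. An orthogonal $\mathfrak l$-module $(\rho,\mathfrak a)$ is a finite-dimensional real vector space with a nondegenerate symmetric bilinear form $\langle\cdot,\cdot\rangle_{\mathfrak a}$ and a representation by skew-adjoint maps; $\mathfrak a^{\mathfrak l}$ denotes invariants. $C^p(\mathfrak l,\mathfrak a)$: alternating $p$-linear maps with Chevalley–Eilenberg differential $d$; $C^p(\mathfrak l)=C^p(\mathfrak l,\mathbb R)$; $\langle\alpha\wedge\beta\rangle$ is the wedge product followed by contraction with $\langle\cdot,\cdot\rangle_{\mathfrak a}$. $\mathcal Z^2_Q(\mathfrak l,\mathfrak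 a)=\{(\alpha,\gamma)\in C^2(\mathfrak l,\mathfrak a)\oplus C^3(\mathfrak l): d\alpha=0,d\gamma=\frac12\langle\alpha\wedge\alpha\rangle\}$; the group $C^1(\mathfrak l,\mathfrak a)\oplus C^2(\mathfrak l)$ with $(\tau_1,\sigma_1)*(\tau_2,\sigma_2)=(\tau_1+\tau_2,\sigma_1+\sigma_2+\frac12\langle\tau_1\wedge\tau_2\rangle)$ acts by $(\alpha,\gamma)(\tau,\sigma)=(\alpha+d\tau,\gamma+d\sigma+\langle(\alpha+\frac12d\tau)\wedge\tau\rangle)$; $\mathcal H^2_Q(\mathfrak l,\mathfrak a)$ is the orbit set. Admissibility: with $\mathfrak l^{m+2}=0$, $\mathfrak l_{(0)}=\mathfrak z(\mathfrak l)\cap\ker\rho$, $\mathfrak l_{(k)}=\mathfrak z(\mathfrak l)\cap\mathfrak l^{k+1}$ ($k\ge1$), and a representative with $\alpha(\mathfrak l,\mathfrak l)\subset\mathfrak a^{\mathfrak l}$, the class is admissible iff for all $0\le k\le m$: $(A_k)$ whenever $L_0\in\mathfrak l_{(k)}$ and there are $A_0\in\mathfrak a$, $Z_0\in(\mathfrak l^{k+1})^*$ with $\alpha(L,L_0)=0$ and $\gamma(L,L_0,\cdot)=-\langle A_0,\alpha(L,\cdot)\rangle_{\mathfrak a}+\langle Z_0,[L,\cdot]\rangle$ on $\mathfrak l^{k+1}$ for all $L$, then $L_0=0$; $(B_k)$ $\alpha$ applied to the kernel of the bracket map $\mathfrak l\otimes\mathfrak l^{k+1}\to\mathfrak l$ yields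 a nondegenerate subspace of $\mathfrak a$. *)

theory Defs
  imports "HOL-Analysis.Analysis"
begin

definition lie_algebra :: "('l::euclidean_space \<Rightarrow> 'l \<Rightarrow> 'l) \<Rightarrow> bool" where
  "lie_algebra br \<longleftrightarrow> bilinear br \<and> (\<forall>x. br x x = 0) \<and>
     (\<forall>x y z. br x (br y z) + br y (br z x) + br z (br x y) = 0)"

text \<open>Lower central series, shifted: lcs br k = l^(k+1). So lcs br 0 = l, lcs br 1 = l'.\<close>
fun lcs :: "('l::euclidean_space \<Rightarrow> 'l \<Rightarrow> 'l) \<Rightarrow> nat \<Rightarrow> 'l set" where
  "lcs br 0 = UNIV"
| "lcs br (Suc k) = span {br x y | x y. y \<in> lcs br k}"

definition nilpotent_lie :: "('l::euclidean_space \<Rightarrow> 'l \<Rightarrow> 'l) \<Rightarrow> bool" where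
  "nilpotent_lie br \<longleftrightarrow> (\<exists>k. lcs br k = {0})"

definition lie_center :: "('l::euclidean_space \<Rightarrow> 'l \<Rightarrow> 'l) \<Rightarrow> 'l set" where
  "lie_center br = {z. \<forall>x. br x z = 0}"

definition bracket_sub :: "('l::euclidean_space \<Rightarrow> 'l \<Rightarrow> 'l) \<Rightarrow> 'l set \<Rightarrow> 'l set \<Rightarrow> 'l set" where
  "bracket_sub br U V = span {br x y | x y. x \<in> U \<and> y \<in> V}"

text \<open>Orthogonal module (rho, a) with nondegenerate symmetric bilinear form B
  (not necessarily definite); a is the whole type 'a.\<close>
definition orthogonal_module ::
  "('l::euclidean_space \<Rightarrow> 'l \<Rightarrow> 'l) \<Rightarrow> ('l \<Rightarrow> 'a::euclidean_space \<Rightarrow> 'a) \<Rightarrow> ('a \<Rightarrow> 'a \<Rightarrow> real) \<Rightarrow> bool" where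
  "orthogonal_module br rho B \<longleftrightarrow>
     bilinear B \<and> (\<forall>u v. B u v = B v u) \<and> (\<forall>u. (\<forall>v. B u v = 0) \<longrightarrow> u = 0) \<and>
     bilinear rho \<and>
     (\<forall>X Y v. rho (br X Y) v = rho X (rho Y v) - rho Y (rho X v)) \<and>
     (\<forall>L u v. B (rho L u) v + B u (rho L v) = 0)"

definition invariant_sub :: "('l \<Rightarrow> 'a::euclidean_space \<Rightarrow> 'a) \<Rightarrow> 'a set \<Rightarrow> bool" where
  "invariant_sub rho U \<longleftrightarrow> (\<forall>L. \<forall>u\<in>U. rho L u \<in> U)"

definition semisimple_module :: "('l \<Rightarrow> 'a::euclidean_space \<Rightarrow> 'a) \<Rightarrow> bool" where
  "semisimple_module rho \<longleftrightarrow>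
     (\<forall>U. subspace U \<and> invariant_sub rho U \<longrightarrow>
        (\<exists>V. subspace V \<and> invariant_sub rho V \<and> U \<inter> V = {0} \<and> U + V = UNIV))"

definition invariants :: "('l \<Rightarrow> 'a::euclidean_space \<Rightarrow> 'a) \<Rightarrow> 'a set" where
  "invariants rho = {v. \<forall>L. rho L v = 0}"

definition rho_kernel :: "('l \<Rightarrow> 'a::euclidean_space \<Rightarrow> 'a) \<Rightarrow> 'l set" where
  "rho_kernel rho = {L. \<forall>v. rho L v = 0}"

definition cochain2 :: "('l::euclidean_space \<Rightarrow> 'l \<Rightarrow> 'a::euclidean_space) \<Rightarrow> bool" where
  "cochain2 \<alpha> \<longleftrightarrow> bilinear \<alpha> \<and> (\<forall>x. \<alpha> x x = 0)"

definition cochain3 :: "('l::euclidean_space \<Rightarrow> 'l \<Rightarrow> 'l \<Rightarrow> real) \<Rightarrow> bool" where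
  "cochain3 \<gamma> \<longleftrightarrow> (\<forall>y z. linear (\<lambda>x. \<gamma> x y z)) \<and> (\<forall>x z. linear (\<lambda>y. \<gamma> x y z)) \<and>
     (\<forall>x y. linear (\<lambda>z. \<gamma> x y z)) \<and> (\<forall>x z. \<gamma> x x z = 0) \<and> (\<forall>x y. \<gamma> x y y = 0)"

definition d2 :: "('l \<Rightarrow> 'l \<Rightarrow> 'l) \<Rightarrow> ('l \<Rightarrow> 'a \<Rightarrow> 'a) \<Rightarrow> ('l \<Rightarrow> 'l \<Rightarrow> 'a::real_vector)
     \<Rightarrow> 'l \<Rightarrow> 'l \<Rightarrow> 'l \<Rightarrow> 'a" where
  "d2 br rho \<alpha> X Y Z =
     rho X (\<alpha> Y Z) - rho Y (\<alpha> X Z) + rho Z (\<alpha> X Y)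
     - \<alpha> (br X Y) Z + \<alpha> (br X Z) Y - \<alpha> (br Y Z) X"

definition d3 :: "('l \<Rightarrow> 'l \<Rightarrow> 'l) \<Rightarrow> ('l \<Rightarrow> 'l \<Rightarrow> 'l \<Rightarrow> real) \<Rightarrow> 'l \<Rightarrow> 'l \<Rightarrow> 'l \<Rightarrow> 'l \<Rightarrow> real" where
  "d3 br \<gamma> X1 X2 X3 X4 =
     - \<gamma> (br X1 X2) X3 X4 + \<gamma> (br X1 X3) X2 X4 - \<gamma> (br X1 X4) X2 X3
     - \<gamma> (br X2 X3) X1 X4 + \<gamma> (br X2 X4) X1 X3 - \<gamma> (br X3 X4) X1 X2"

text \<open>The 4-form <alpha wedge alpha> (wedge product summed over (2,2)-shuffles, then
  contraction with B).\<close>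
definition wedge_contr :: "('a \<Rightarrow> 'a \<Rightarrow> real) \<Rightarrow> ('l \<Rightarrow> 'l \<Rightarrow> 'a) \<Rightarrow> 'l \<Rightarrow> 'l \<Rightarrow> 'l \<Rightarrow> 'l \<Rightarrow> real" where
  "wedge_contr B \<alpha> X1 X2 X3 X4 =
       B (\<alpha> X1 X2) (\<alpha> X3 X4) - B (\<alpha> X1 X3) (\<alpha> X2 X4) + B (\<alpha> X1 X4) (\<alpha> X2 X3)
     + B (\<alpha> X2 X3) (\<alpha> X1 X4) - B (\<alpha> X2 X4) (\<alpha> X1 X3) + B (\<alpha> X3 X4) (\<alpha> X1 X2)"

definition Z2Q :: "('l::euclidean_space \<Rightarrow> 'l \<Rightarrow> 'l) \<Rightarrow> ('l \<Rightarrow> 'a::euclidean_space \<Rightarrow> 'a) \<Rightarrow> ('a \<Rightarrow> 'a \<Rightarrow> real)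
     \<Rightarrow> ('l \<Rightarrow> 'l \<Rightarrow> 'a) \<Rightarrow> ('l \<Rightarrow> 'l \<Rightarrow> 'l \<Rightarrow> real) \<Rightarrow> bool" where
  "Z2Q br rho B \<alpha> \<gamma> \<longleftrightarrow> cochain2 \<alpha> \<and> cochain3 \<gamma> \<and>
     (\<forall>X Y Z. d2 br rho \<alpha> X Y Z = 0) \<and>
     (\<forall>X1 X2 X3 X4. d3 br \<gamma> X1 X2 X3 X4 = (1/2) * wedge_contr B \<alpha> X1 X2 X3 X4)"

definition lsub :: "('l::euclidean_space \<Rightarrow> 'l \<Rightarrow> 'l) \<Rightarrow> ('l \<Rightarrow> 'a::euclidean_space \<Rightarrow> 'a) \<Rightarrow> nat \<Rightarrow> 'l set" where
  "lsub br rho k = (if k = 0 then lie_center br \<inter> rho_kernel rho else lie_center br \<inter> lcs br k)"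

text \<open>Condition (A_k). Z0 in (l^(k+1))^* is represented by a linear functional on l
  (every functional on the subspace extends); only its values on l^(k+1) matter.\<close>
definition cond_A :: "('l::euclidean_space \<Rightarrow> 'l \<Rightarrow> 'l) \<Rightarrow> ('l \<Rightarrow> 'a::euclidean_space \<Rightarrow> 'a) \<Rightarrow> ('a \<Rightarrow> 'a \<Rightarrow> real)
     \<Rightarrow> ('l \<Rightarrow> 'l \<Rightarrow> 'a) \<Rightarrow> ('l \<Rightarrow> 'l \<Rightarrow> 'l \<Rightarrow> real) \<Rightarrow> nat \<Rightarrow> bool" where
  "cond_A br rho B \<alpha> \<gamma> k \<longleftrightarrow>
     (\<forall>L0 \<in> lsub br rho k.
        (\<exists>(A0::'a) (Z0::'l \<Rightarrow> real). linear Z0 \<and>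
           (\<forall>L. \<alpha> L L0 = 0 \<and>
                (\<forall>X \<in> lcs br k. \<gamma> L L0 X = - B A0 (\<alpha> L X) + Z0 (br L X))))
        \<longrightarrow> L0 = 0)"

text \<open>alpha applied to the kernel of the bracket map l \<otimes> l^(k+1) \<rightarrow> l. Elements of the tensor
  product are represented as finite sums of elementary tensors (lists of pairs).\<close>
definition alpha_ker :: "('l::euclidean_space \<Rightarrow> 'l \<Rightarrow> 'l) \<Rightarrow> ('l \<Rightarrow> 'l \<Rightarrow> 'a::euclidean_space) \<Rightarrow> nat \<Rightarrow> 'a set" where
  "alpha_ker br \<alpha> k =
     {sum_list (map (\<lambda>(X,Y). \<alpha> X Y) ps) | ps.
        (\<forall>(X,Y) \<in> set ps. Y \<in> lcs br k) \<and> sum_list (map (\<lambda>(X,Y). br X Y) ps) = 0}"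

definition nondegenerate_sub :: "('a::real_vector \<Rightarrow> 'a \<Rightarrow> real) \<Rightarrow> 'a set \<Rightarrow> bool" where
  "nondegenerate_sub B W \<longleftrightarrow> (\<forall>w\<in>W. (\<forall>w'\<in>W. B w w' = 0) \<longrightarrow> w = 0)"

definition cond_B :: "('l::euclidean_space \<Rightarrow> 'l \<Rightarrow> 'l) \<Rightarrow> ('a::euclidean_space \<Rightarrow> 'a \<Rightarrow> real)
     \<Rightarrow> ('l \<Rightarrow> 'l \<Rightarrow> 'a) \<Rightarrow> nat \<Rightarrow> bool" where
  "cond_B br B \<alpha> k \<longleftrightarrow> nondegenerate_sub B (alpha_ker br \<alpha> k)"

text \<open>Admissibility of the class [alpha,gamma], tested on a representative with
  alpha(l,l) \<subseteq> a^l; k ranges over 0..m where l^(m+2)=0.\<close>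
definition admissible :: "('l::euclidean_space \<Rightarrow> 'l \<Rightarrow> 'l) \<Rightarrow> ('l \<Rightarrow> 'a::euclidean_space \<Rightarrow> 'a) \<Rightarrow> ('a \<Rightarrow> 'a \<Rightarrow> real)
     \<Rightarrow> ('l \<Rightarrow> 'l \<Rightarrow> 'a) \<Rightarrow> ('l \<Rightarrow> 'l \<Rightarrow> 'l \<Rightarrow> real) \<Rightarrow> bool" where
  "admissible br rho B \<alpha> \<gamma> \<longleftrightarrow>
     (\<forall>m. lcs br (m + 1) = {0} \<longrightarrow>
        (\<forall>k \<le> m. cond_A br rho B \<alpha> \<gamma> k \<and> cond_B br B \<alpha> k))"

end

theory Submission
  imports Defs
begin

lemma c3_antisym:
  assumes "cochain3 \<gamma>"
  shows "\<gamma> x y z = - \<gamma> y x z"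
proof -
  have l1: "linear (\<lambda>x. \<gamma> x y z)" for y z using assms unfolding cochain3_def by blast
  have l2: "linear (\<lambda>y. \<gamma> x y z)" for x z using assms unfolding cochain3_def by blast
  have z: "\<gamma> x x z = 0" for x z using assms unfolding cochain3_def by blast
  have "0 = \<gamma> (x+y) (x+y) z" using z by simp
  also have "\<dots> = \<gamma> x (x+y) z + \<gamma> y (x+y) z" using linear_add[OF l1] by simp
  also have "\<dots> = \<gamma> x x z + \<gamma> x y z + \<gamma> y x z + \<gamma> y y z"
    using linear_add[OF l2] by simp
  finally show ?thesis using z by simp
qed

lemma c3_13:
  assumes "cochain3 \<gamma>"
  shows "\<gamma> x y x = 0"
  using c3_antisym[OF assms, of x y x] assms unfolding cochain3_def by simp

lemma c3_dim2:
  assumes c: "cochain3 \<gamma>" and d: "dim S = 2" and u: "u \<in> S" and v: "v \<in> S" and w: "w \<in> S"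
  shows "\<gamma> u v w = 0"
proof -
  have l1: "linear (\<lambda>x. \<gamma> x y z)" for y z using c unfolding cochain3_def by blast
  have l2: "linear (\<lambda>y. \<gamma> x y z)" for x z using c unfolding cochain3_def by blast
  have l3: "linear (\<lambda>z. \<gamma> x y z)" for x y using c unfolding cochain3_def by blast
  show ?thesis
  proof (cases "w \<in> span {v}")
    case True
    then obtain k where "w = k *\<^sub>R v" by (auto simp: span_singleton)
    then show ?thesis using linear_cmul[OF l3, of u v k v] c unfolding cochain3_def by simp
  next
    case False
    show ?thesis
    proof (cases "v = 0")
      case True
      then show ?thesis using linear_0[OF l2] by simp
    next
      case v0: False
      have ind: "independent {w, v}"
        using False v0 by (simp add: independent_insert)
      have wv: "w \<noteq> v" using False span_base[of v "{v}"] by auto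
      have "S \<subseteq> span {w, v}"
        using card_eq_dim[of "{w,v}" S] ind wv d v w by simp
      then have "u \<in> span {w, v}" using u by blast
      moreover have "\<gamma> x v w = 0" if "x \<in> {w, v}" for x
        using that c3_13[OF c] c unfolding cochain3_def by auto
      ultimately show ?thesis using linear_eq_0_on_span[OF l1] by blast
    qed
  qed
qed

theorem lemma3:
  fixes br :: "'l::euclidean_space \<Rightarrow> 'l \<Rightarrow> 'l"
    and rho :: "'l \<Rightarrow> 'a::euclidean_space \<Rightarrow> 'a"
    and B :: "'a \<Rightarrow> 'a \<Rightarrow> real"
    and \<alpha> :: "'l \<Rightarrow> 'l \<Rightarrow> 'a"
    and \<gamma> :: "'l \<Rightarrow> 'l \<Rightarrow> 'l \<Rightarrow> real"
    and Lbar :: "'l set"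
    and K :: 'l
  assumes "lie_algebra br"
    and "nilpotent_lie br"
    and "dim (lcs br 1) = 2"
    and "lcs br 1 \<subseteq> lie_center br"
    and "subspace Lbar" and "dim Lbar = 3"
    and "bracket_sub br Lbar Lbar = lcs br 1"
    and "orthogonal_module br rho B"
    and "semisimple_module rho"
    and "Z2Q br rho B \<alpha> \<gamma>"
    and "\<forall>X Y. \<alpha> X Y \<in> invariants rho"
    and "admissible br rho B \<alpha> \<gamma>"
    and "K \<in> lcs br 1"
    and "\<forall>X \<in> Lbar. \<alpha> K X = 0"
  shows "\<forall>X. \<alpha> K X = 0"
proof -
  note A = assms
  have brbil: "bilinear br" using A(1) unfolding lie_algebra_def by blast
  have brl1: "linear (\<lambda>x. br x y)" for y using brbil unfolding bilinear_def by blast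
  have brl2: "linear (br x)" for x using brbil unfolding bilinear_def by blast
  have brxx: "br x x = 0" for x using A(1) unfolding lie_algebra_def by blast
  have branti: "br x y = - br y x" for x y
  proof -
    have "0 = br (x+y) (x+y)" using brxx by simp
    also have "\<dots> = br x x + br x y + br y x + br y y"
      using linear_add[OF brl1] linear_add[OF brl2] by simp
    finally show ?thesis using brxx by (simp add: eq_neg_iff_add_eq_0)
  qed
  have cen: "br x z = 0" if "z \<in> lcs br 1" for x z
    using that A(4) unfolding lie_center_def by blast
  have cen2: "br z x = 0" if "z \<in> lcs br 1" for x z
    using cen[OF that, of x] branti[of z x] by simp
  have inl1: "br x y \<in> lcs br 1" for x y
    by (auto intro: span_base)
  have c2: "cochain2 \<alpha>" and c3: "cochain3 \<gamma>"
    and d2z: "\<And>X Y Z. d2 br rho \<alpha> X Y Z = 0"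
    and d3e: "\<And>X1 X2 X3 X4. d3 br \<gamma> X1 X2 X3 X4 = (1/2) * wedge_contr B \<alpha> X1 X2 X3 X4"
    using A(10) unfolding Z2Q_def by blast+
  have al1: "linear (\<lambda>x. \<alpha> x y)" for y using c2 unfolding cochain2_def bilinear_def by blast
  have al2: "linear (\<alpha> x)" for x using c2 unfolding cochain2_def bilinear_def by blast
  have aanti: "\<alpha> x y = - \<alpha> y x" for x y
  proof -
    have z: "\<alpha> x x = 0" for x using c2 unfolding cochain2_def by blast
    have "0 = \<alpha> (x+y) (x+y)" using z by simp
    also have "\<dots> = \<alpha> x x + \<alpha> x y + \<alpha> y x + \<alpha> y y"
      using linear_add[OF al1] linear_add[OF al2] by simp
    finally show ?thesis using z by (simp add: eq_neg_iff_add_eq_0)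
  qed
  have Bbil: "bilinear B" and Bsym: "\<And>u v. B u v = B v u"
    and Bnd: "\<And>u. (\<forall>v. B u v = 0) \<longrightarrow> u = 0"
    using A(8) unfolding orthogonal_module_def by blast+
  have Bl1: "linear (\<lambda>x. B x y)" for y using Bbil unfolding bilinear_def by blast
  have Bl2: "linear (B x)" for x using Bbil unfolding bilinear_def by blast
  have rz: "rho L (\<alpha> X Y) = 0" for L X Y using A(11) unfolding invariants_def by blast
  have cocyc: "\<alpha> (br X Y) Z = \<alpha> (br X Z) Y - \<alpha> (br Y Z) X" for X Y Z
  proof -
    have "0 = - \<alpha> (br X Y) Z + \<alpha> (br X Z) Y - \<alpha> (br Y Z) X"
      using d2z[of X Y Z] unfolding d2_def rz by simp
    then show ?thesis by (simp add: algebra_simps)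
  qed
  have all: "\<alpha> v K' = 0" if v: "v \<in> lcs br 1" and K': "K' \<in> lcs br 1" for v K'
  proof -
    have "\<alpha> (br x y) K' = 0" for x y
      using cocyc[of x y K'] cen[OF K'] linear_0[OF al1] by simp
    moreover have "v \<in> span {br x y | x y. y \<in> UNIV}" using v by (simp add: One_nat_def)
    ultimately show ?thesis
      using linear_eq_0_on_span[OF al1, of "{br x y | x y. y \<in> UNIV}" K' v] by blast
  qed
  have key: "B (\<alpha> K W) (\<alpha> K' X) = 0" if K': "K' \<in> lcs br 1" and X: "X \<in> Lbar" for K' W X
  proof -
    have g0: "\<gamma> (br W X) K K' = 0"
      using c3_dim2[OF c3 A(3) inl1 A(13) K'] .
    have l3a: "linear (\<lambda>x. \<gamma> x y z)" for y z using c3 unfolding cochain3_def by blast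
    have "d3 br \<gamma> K K' W X = - \<gamma> (br W X) K K'"
      unfolding d3_def using cen[OF K'] cen2[OF A(13)] cen2[OF K'] linear_0[OF l3a] by simp
    moreover have "wedge_contr B \<alpha> K K' W X = - 2 * B (\<alpha> K W) (\<alpha> K' X)"
      unfolding wedge_contr_def using all[OF A(13) K'] A(14) X linear_0[OF Bl1] linear_0[OF Bl2]
        Bsym[of "\<alpha> K' X" "\<alpha> K W"] by simp
    ultimately show ?thesis using d3e[of K K' W X] g0 by simp
  qed
  have step2: "B (\<alpha> K W) (\<alpha> K2 Z) = 0" if K2: "K2 \<in> lcs br 1" for K2 W Z
  proof -
    have "K2 \<in> span {br x y | x y. x \<in> Lbar \<and> y \<in> Lbar}"
      using K2 A(7) unfolding bracket_sub_def by simp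
    moreover have "subspace {K2. \<forall>W Z. B (\<alpha> K W) (\<alpha> K2 Z) = 0}"
    proof (rule subspaceI)
      show "0 \<in> {K2. \<forall>W Z. B (\<alpha> K W) (\<alpha> K2 Z) = 0}"
        using linear_0[OF al1] linear_0[OF Bl2] by simp
    next
      fix x y assume "x \<in> {K2. \<forall>W Z. B (\<alpha> K W) (\<alpha> K2 Z) = 0}" "y \<in> {K2. \<forall>W Z. B (\<alpha> K W) (\<alpha> K2 Z) = 0}"
      then show "x + y \<in> {K2. \<forall>W Z. B (\<alpha> K W) (\<alpha> K2 Z) = 0}"
        using linear_add[OF al1] linear_add[OF Bl2] by simp
    next
      fix c x assume "x \<in> {K2. \<forall>W Z. B (\<alpha> K W) (\<alpha> K2 Z) = 0}"
      then show "c *\<^sub>R x \<in> {K2. \<forall>W Z. B (\<alpha> K W) (\<alpha> K2 Z) = 0}"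
        using linear_cmul[OF al1] linear_cmul[OF Bl2] by simp
    qed
    moreover have "\<forall>W Z. B (\<alpha> K W) (\<alpha> v Z) = 0"
      if "v \<in> {br x y | x y. x \<in> Lbar \<and> y \<in> Lbar}" for v
    proof -
      from that obtain x y where v: "v = br x y" and x: "x \<in> Lbar" and y: "y \<in> Lbar" by blast
      show ?thesis
      proof (intro allI)
        fix W Z
        have "B (\<alpha> K W) (\<alpha> v Z) = B (\<alpha> K W) (\<alpha> (br x Z) y) - B (\<alpha> K W) (\<alpha> (br y Z) x)"
          using v cocyc[of x y Z] linear_diff[OF Bl2] by simp
        also have "\<dots> = 0" using key[OF inl1 x] key[OF inl1 y] by simp
        finally show "B (\<alpha> K W) (\<alpha> v Z) = 0" .
      qed
    qed
    ultimately have "\<forall>W Z. B (\<alpha> K W) (\<alpha> K2 Z) = 0"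
      using span_induct[where P="\<lambda>K2. \<forall>W Z. B (\<alpha> K W) (\<alpha> K2 Z) = 0"] by blast
    then show ?thesis by blast
  qed
  have lcs2: "lcs br (1 + 1) = {0}"
  proof -
    have "{br x y | x y. y \<in> lcs br 1} = {0}"
    proof
      show "{br x y | x y. y \<in> lcs br 1} \<subseteq> {0}" using cen by blast
      have "br 0 0 = 0" by (rule brxx)
      moreover have "(0::'l) \<in> lcs br 1" by (simp add: One_nat_def span_zero)
      ultimately show "{0} \<subseteq> {br x y | x y. y \<in> lcs br 1}" by force
    qed
    moreover have "lcs br (1 + 1) = span {br x y | x y. y \<in> lcs br 1}"
      by (simp only: One_nat_def Suc_eq_plus1[symmetric] add_Suc_shift add_0 lcs.simps)
    ultimately show ?thesis by simp
  qed
  have "\<forall>k \<le> 1. cond_A br rho B \<alpha> \<gamma> k \<and> cond_B br B \<alpha> k"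
  proof -
    have "\<forall>m. lcs br (m + 1) = {0} \<longrightarrow> (\<forall>k \<le> m. cond_A br rho B \<alpha> \<gamma> k \<and> cond_B br B \<alpha> k)"
      using A(12) unfolding admissible_def .
    then have "lcs br (1 + 1) = {0} \<longrightarrow> (\<forall>k \<le> 1. cond_A br rho B \<alpha> \<gamma> k \<and> cond_B br B \<alpha> k)"
      by (rule spec)
    then show ?thesis using lcs2 by (rule mp)
  qed
  then have cB: "cond_B br B \<alpha> 1" by simp
  show ?thesis
  proof
    fix X
    have mem: "\<alpha> K X \<in> alpha_ker br \<alpha> 1"
    proof -
      have "\<alpha> K X = sum_list (map (\<lambda>(X,Y). \<alpha> X Y) [(-X, K)])"
        using linear_neg[OF al1] aanti[of X K] by simp
      moreover have "sum_list (map (\<lambda>(X,Y). br X Y) [(-X, K)]) = 0"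
        using cen[OF A(13)] by simp
      moreover have "\<forall>(X,Y) \<in> set [(-X, K)]. Y \<in> lcs br 1" using A(13) by simp
      ultimately show ?thesis unfolding alpha_ker_def by blast
    qed
    have orth: "B (\<alpha> K X) w = 0" if win: "w \<in> alpha_ker br \<alpha> 1" for w
    proof -
      obtain ps where w: "w = sum_list (map (\<lambda>(X,Y). \<alpha> X Y) ps)"
        and ps: "\<forall>(X,Y) \<in> set ps. Y \<in> lcs br 1"
        using win unfolding alpha_ker_def by blast
      have "B (\<alpha> K X) (sum_list (map (\<lambda>(X,Y). \<alpha> X Y) ps)) = 0" using ps
      proof (induction ps)
        case Nil
        then show ?case using linear_0[OF Bl2] by simp
      next
        case (Cons p ps)
        obtain a b where p: "p = (a, b)" by force
        have b: "b \<in> lcs br 1" using Cons.prems p by auto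
        have "B (\<alpha> K X) (\<alpha> a b) = 0"
          using step2[OF b, of X a] aanti[of a b] linear_neg[OF Bl2] by simp
        then show ?case using Cons p linear_add[OF Bl2] by simp
      qed
      then show ?thesis using w by simp
    qed
    show "\<alpha> K X = 0"
      using cB mem orth unfolding cond_B_def nondegenerate_sub_def by blast
  qed
qed

end
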